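(* Let $R$ be a left hereditary ring, $M$ a projective left $R$-module and $N$ a submodule of $M$. Then $\beta(N)\subseteq\langle E_N(0)\rangle\subseteq\beta_{co}(N)$, where $N$ is regarded as an $R$-module.
   Context: Rings are associative with identity; modules are unital left modules. $R$ is left hereditary if every submodule of a projective left $R$-module is projective. For a module $X$: a submodule $P$ is prime if $RX\not\subseteq P$ and for every ideal $A$ of $R$ and submodule $K$ with $AK\subseteq P$, $K\subseteq P$ or $AX\subseteq P$; completely prime if $RX\not\subseteq P$ and $rx\in P$ implies $x\in P$ or $rX\subseteq P$. $\beta(X)$ (resp. $\beta_{co}(X)$) is the intersection of all prime (resp. completely prime) submodules of $X$ ($=X$ if none). $E_X(0)=\{rx: r\in R, x\in X, r^kx=0\text{ for some }k\in\mathbb N\}$, $\langle E_X(0)\rangle$ the submodule generated. *)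

theory Defs
  imports "HOL-Algebra.Algebra"
begin

text \<open>HOL-Algebra's module locale requires a commutative ring, so unital left
modules over an arbitrary ring are defined here, reusing the module record.\<close>

definition lmodule :: "'r ring \<Rightarrow> ('r, 'm) module \<Rightarrow> bool" where
  "lmodule R M \<longleftrightarrow> ring R \<and> abelian_group M \<and>
     (\<forall>a \<in> carrier R. \<forall>x \<in> carrier M. a \<odot>\<^bsub>M\<^esub> x \<in> carrier M) \<and>
     (\<forall>a \<in> carrier R. \<forall>b \<in> carrier R. \<forall>x \<in> carrier M.
        (a \<oplus>\<^bsub>R\<^esub> b) \<odot>\<^bsub>M\<^esub> x = (a \<odot>\<^bsub>M\<^esub> x) \<oplus>\<^bsub>M\<^esub> (b \<odot>\<^bsub>M\<^esub> x)) \<and>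
     (\<forall>a \<in> carrier R. \<forall>x \<in> carrier M. \<forall>y \<in> carrier M.
        a \<odot>\<^bsub>M\<^esub> (x \<oplus>\<^bsub>M\<^esub> y) = (a \<odot>\<^bsub>M\<^esub> x) \<oplus>\<^bsub>M\<^esub> (a \<odot>\<^bsub>M\<^esub> y)) \<and>
     (\<forall>a \<in> carrier R. \<forall>b \<in> carrier R. \<forall>x \<in> carrier M.
        (a \<otimes>\<^bsub>R\<^esub> b) \<odot>\<^bsub>M\<^esub> x = a \<odot>\<^bsub>M\<^esub> (b \<odot>\<^bsub>M\<^esub> x)) \<and>
     (\<forall>x \<in> carrier M. \<one>\<^bsub>R\<^esub> \<odot>\<^bsub>M\<^esub> x = x)"

text \<open>Submodules (as subsets of the carrier); a submodule \<open>N\<close> regarded as a module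
is \<open>M\<lparr>carrier := N\<rparr>\<close>.\<close>

definition lsubmodule :: "'r ring \<Rightarrow> 'm set \<Rightarrow> ('r, 'm) module \<Rightarrow> bool" where
  "lsubmodule R N M \<longleftrightarrow> N \<subseteq> carrier M \<and> \<zero>\<^bsub>M\<^esub> \<in> N \<and>
     (\<forall>x \<in> N. \<forall>y \<in> N. x \<oplus>\<^bsub>M\<^esub> y \<in> N) \<and>
     (\<forall>x \<in> N. \<ominus>\<^bsub>M\<^esub> x \<in> N) \<and>
     (\<forall>a \<in> carrier R. \<forall>x \<in> N. a \<odot>\<^bsub>M\<^esub> x \<in> N)"

definition lmod_hom :: "'r ring \<Rightarrow> ('r, 'm) module \<Rightarrow> ('r, 'n) module \<Rightarrow> ('m \<Rightarrow> 'n) \<Rightarrow> bool" where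
  "lmod_hom R M M' f \<longleftrightarrow> f \<in> carrier M \<rightarrow> carrier M' \<and>
     (\<forall>x \<in> carrier M. \<forall>y \<in> carrier M. f (x \<oplus>\<^bsub>M\<^esub> y) = f x \<oplus>\<^bsub>M'\<^esub> f y) \<and>
     (\<forall>a \<in> carrier R. \<forall>x \<in> carrier M. f (a \<odot>\<^bsub>M\<^esub> x) = a \<odot>\<^bsub>M'\<^esub> f x)"

definition free_lmod :: "'r ring \<Rightarrow> 'i set \<Rightarrow> ('r, 'i \<Rightarrow> 'r) module" where
  "free_lmod R I = \<lparr> partial_object.carrier = {f. (\<forall>i. f i \<in> carrier R) \<and> (\<forall>i. i \<notin> I \<longrightarrow> f i = \<zero>\<^bsub>R\<^esub>)
                                   \<and> finite {i. f i \<noteq> \<zero>\<^bsub>R\<^esub>}},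
                    Group.monoid.mult = (\<lambda>f g i. f i \<otimes>\<^bsub>R\<^esub> g i),
                    Group.monoid.one = (\<lambda>i. \<one>\<^bsub>R\<^esub>),
                    Ring.ring.zero = (\<lambda>i. \<zero>\<^bsub>R\<^esub>),
                    Ring.ring.add = (\<lambda>f g i. f i \<oplus>\<^bsub>R\<^esub> g i),
                    Module.module.smult = (\<lambda>a f i. a \<otimes>\<^bsub>R\<^esub> f i) \<rparr>"

text \<open>Projective: a direct summand (retract) of a free module \<open>R^(I)\<close>.  The index
set is taken in the carrier type of the module (the carrier itself suffices).\<close>

definition projective :: "'r ring \<Rightarrow> ('r, 'm) module \<Rightarrow> bool" where
  "projective R M \<longleftrightarrow> (\<exists>(I :: 'm set) i p.
      lmod_hom R M (free_lmod R I) i \<and> lmod_hom R (free_lmod R I) M p \<and>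
      (\<forall>x \<in> carrier M. p (i x) = x))"

text \<open>Left hereditary: every submodule of a projective left module is projective.
Modules range over those whose carrier lives in the type given by the first
(phantom) argument.\<close>

definition left_hereditary :: "'m itself \<Rightarrow> 'r ring \<Rightarrow> bool" where
  "left_hereditary (T :: 'm itself) R \<longleftrightarrow> ring R \<and>
     (\<forall>(M :: ('r, 'm) module) N. lmodule R M \<and> projective R M \<and> lsubmodule R N M
        \<longrightarrow> projective R (M\<lparr>carrier := N\<rparr>))"

text \<open>\<open>smult_set Y A K = {a k | a \<in> A, k \<in> K}\<close>; for a submodule \<open>P\<close>,
\<open>AK \<subseteq> P\<close> iff \<open>smult_set Y A K \<subseteq> P\<close>.\<close>

definition smult_set :: "('r, 'm) module \<Rightarrow> 'r set \<Rightarrow> 'm set \<Rightarrow> 'm set" where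
  "smult_set Y A K = {Module.module.smult Y a k | a k. a \<in> A \<and> k \<in> K}"

definition prime_submodule :: "'r ring \<Rightarrow> ('r, 'm) module \<Rightarrow> 'm set \<Rightarrow> bool" where
  "prime_submodule R Y P \<longleftrightarrow> lsubmodule R P Y \<and>
     \<not> smult_set Y (carrier R) (carrier Y) \<subseteq> P \<and>
     (\<forall>A K. ideal A R \<and> lsubmodule R K Y \<and> smult_set Y A K \<subseteq> P
        \<longrightarrow> K \<subseteq> P \<or> smult_set Y A (carrier Y) \<subseteq> P)"

definition completely_prime_submodule :: "'r ring \<Rightarrow> ('r, 'm) module \<Rightarrow> 'm set \<Rightarrow> bool" where
  "completely_prime_submodule R Y P \<longleftrightarrow> lsubmodule R P Y \<and>
     \<not> smult_set Y (carrier R) (carrier Y) \<subseteq> P \<and>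
     (\<forall>r \<in> carrier R. \<forall>x \<in> carrier Y. r \<odot>\<^bsub>Y\<^esub> x \<in> P
        \<longrightarrow> x \<in> P \<or> smult_set Y {r} (carrier Y) \<subseteq> P)"

definition prime_radical :: "'r ring \<Rightarrow> ('r, 'm) module \<Rightarrow> 'm set" where
  "prime_radical R Y = (if \<exists>P. prime_submodule R Y P
      then \<Inter> {P. prime_submodule R Y P} else carrier Y)"

definition co_prime_radical :: "'r ring \<Rightarrow> ('r, 'm) module \<Rightarrow> 'm set" where
  "co_prime_radical R Y = (if \<exists>P. completely_prime_submodule R Y P
      then \<Inter> {P. completely_prime_submodule R Y P} else carrier Y)"

definition E_zero :: "'r ring \<Rightarrow> ('r, 'm) module \<Rightarrow> 'm set" where
  "E_zero R Y = {Module.module.smult Y r x | r x. r \<in> carrier R \<and> x \<in> carrier Y \<and>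
                   (\<exists>k::nat. (r [^]\<^bsub>R\<^esub> k) \<odot>\<^bsub>Y\<^esub> x = \<zero>\<^bsub>Y\<^esub>)}"

definition gen_submodule :: "'r ring \<Rightarrow> ('r, 'm) module \<Rightarrow> 'm set \<Rightarrow> 'm set" where
  "gen_submodule R Y S = \<Inter> {K. lsubmodule R K Y \<and> S \<subseteq> K}"

end

theory Submission
  imports Defs
begin

context ring begin

lemma my_idealI:
  assumes "I \<subseteq> carrier R" "\<zero> \<in> I" "\<And>a b. a \<in> I \<Longrightarrow> b \<in> I \<Longrightarrow> a \<oplus> b \<in> I"
    "\<And>a. a \<in> I \<Longrightarrow> \<ominus> a \<in> I"
    "\<And>a x. a \<in> I \<Longrightarrow> x \<in> carrier R \<Longrightarrow> x \<otimes> a \<in> I"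
    "\<And>a x. a \<in> I \<Longrightarrow> x \<in> carrier R \<Longrightarrow> a \<otimes> x \<in> I"
  shows "ideal I R"
proof (rule idealI)
  show "ring R" by (rule ring_axioms)
  show "subgroup I (add_monoid R)"
    using assms(1-4) by (auto intro!: subgroup.intro simp: a_inv_def)
qed (use assms in auto)

lemma ideal_ainv: "ideal I R \<Longrightarrow> a \<in> I \<Longrightarrow> \<ominus> a \<in> I"
  by (rule additive_subgroup.a_inv_closed[OF ideal.axioms(1)])

lemma ideal_zero: "ideal I R \<Longrightarrow> \<zero> \<in> I"
  by (rule additive_subgroup.zero_closed[OF ideal.axioms(1)])

lemma ideal_add: "ideal I R \<Longrightarrow> a \<in> I \<Longrightarrow> b \<in> I \<Longrightarrow> a \<oplus> b \<in> I"
  by (rule additive_subgroup.a_closed[OF ideal.axioms(1)])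

lemma chain_ideal:
  assumes "C \<noteq> {}" "\<And>I. I \<in> C \<Longrightarrow> ideal I R" "\<And>I J. I \<in> C \<Longrightarrow> J \<in> C \<Longrightarrow> I \<subseteq> J \<or> J \<subseteq> I"
  shows "ideal (\<Union>C) R"
proof (rule my_idealI)
  show "\<Union>C \<subseteq> carrier R"
  proof
    fix x assume "x \<in> \<Union>C"
    then obtain I where "I \<in> C" "x \<in> I" by blast
    then show "x \<in> carrier R" using assms(2) ideal.Icarr by metis
  qed
  obtain I0 where "I0 \<in> C" using assms(1) by blast
  then have "\<zero> \<in> I0" using assms(2) ideal_zero by metis
  then show "\<zero> \<in> \<Union>C" using \<open>I0 \<in> C\<close> by blast
  show "a \<oplus> b \<in> \<Union>C" if h: "a \<in> \<Union>C" "b \<in> \<Union>C" for a b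
  proof -
    obtain I J where IJ: "I \<in> C" "J \<in> C" "a \<in> I" "b \<in> J" using h by blast
    show ?thesis
    proof (cases "I \<subseteq> J")
      case True
      then have "a \<oplus> b \<in> J" using IJ assms(2)[of J] ideal_add by (metis subsetD)
      then show ?thesis using IJ by blast
    next
      case False
      then have "J \<subseteq> I" using assms(3) IJ by blast
      then have "a \<oplus> b \<in> I" using IJ assms(2)[of I] ideal_add by (metis subsetD)
      then show ?thesis using IJ by blast
    qed
  qed
  show "\<ominus> a \<in> \<Union>C" if h: "a \<in> \<Union>C" for a
  proof -
    obtain I where "I \<in> C" "a \<in> I" using h by blast
    then have "\<ominus> a \<in> I" using ideal_ainv[OF assms(2)[of I]] by simp
    then show ?thesis using \<open>I \<in> C\<close> by blast
  qed
  show "x \<otimes> a \<in> \<Union>C" if h: "a \<in> \<Union>C" "x \<in> carrier R" for a x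
  proof -
    obtain I where "I \<in> C" "a \<in> I" using h by blast
    then have "x \<otimes> a \<in> I" using ideal.I_l_closed[OF assms(2)[of I]] h(2) by simp
    then show ?thesis using \<open>I \<in> C\<close> by blast
  qed
  show "a \<otimes> x \<in> \<Union>C" if h: "a \<in> \<Union>C" "x \<in> carrier R" for a x
  proof -
    obtain I where "I \<in> C" "a \<in> I" using h by blast
    then have "a \<otimes> x \<in> I" using ideal.I_r_closed[OF assms(2)[of I]] h(2) by simp
    then show ?thesis using \<open>I \<in> C\<close> by blast
  qed
qed

lemma T_ideal:
  assumes Q: "ideal Q R" and b: "b \<in> carrier R"
  shows "ideal {w \<in> carrier R. \<forall>r\<in>carrier R. b \<otimes> r \<otimes> w \<in> Q} R"
proof (rule my_idealI)
  show "\<zero> \<in> {w \<in> carrier R. \<forall>r\<in>carrier R. b \<otimes> r \<otimes> w \<in> Q}"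
    using b Q by (simp add: additive_subgroup.zero_closed ideal.axioms(1))
  show "a \<oplus> c \<in> {w \<in> carrier R. \<forall>r\<in>carrier R. b \<otimes> r \<otimes> w \<in> Q}"
    if "a \<in> {w \<in> carrier R. \<forall>r\<in>carrier R. b \<otimes> r \<otimes> w \<in> Q}" "c \<in> {w \<in> carrier R. \<forall>r\<in>carrier R. b \<otimes> r \<otimes> w \<in> Q}" for a c
    using that b Q by (auto simp: r_distr additive_subgroup.a_closed ideal.axioms(1))
  show "\<ominus> a \<in> {w \<in> carrier R. \<forall>r\<in>carrier R. b \<otimes> r \<otimes> w \<in> Q}"
    if "a \<in> {w \<in> carrier R. \<forall>r\<in>carrier R. b \<otimes> r \<otimes> w \<in> Q}" for a
    using that b Q by (auto simp: r_minus ideal_ainv)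
  show "x \<otimes> a \<in> {w \<in> carrier R. \<forall>r\<in>carrier R. b \<otimes> r \<otimes> w \<in> Q}"
    if "a \<in> {w \<in> carrier R. \<forall>r\<in>carrier R. b \<otimes> r \<otimes> w \<in> Q}" "x \<in> carrier R" for a x
  proof -
    have a: "a \<in> carrier R" "\<forall>r\<in>carrier R. b \<otimes> r \<otimes> a \<in> Q" using that by auto
    have "b \<otimes> r \<otimes> (x \<otimes> a) \<in> Q" if r: "r \<in> carrier R" for r
    proof -
      have "b \<otimes> r \<otimes> (x \<otimes> a) = b \<otimes> (r \<otimes> x) \<otimes> a" using a r b \<open>x \<in> carrier R\<close> by (simp add: m_assoc)
      then show ?thesis using a(2) r \<open>x \<in> carrier R\<close> by simp
    qed
    then show ?thesis using a \<open>x \<in> carrier R\<close> by simp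
  qed
  show "a \<otimes> x \<in> {w \<in> carrier R. \<forall>r\<in>carrier R. b \<otimes> r \<otimes> w \<in> Q}"
    if "a \<in> {w \<in> carrier R. \<forall>r\<in>carrier R. b \<otimes> r \<otimes> w \<in> Q}" "x \<in> carrier R" for a x
    using that b Q by (auto simp: m_assoc[symmetric] ideal.I_r_closed)
qed auto

lemma U_ideal:
  assumes Q: "ideal Q R" and w: "w \<in> carrier R"
  shows "ideal {z \<in> carrier R. \<forall>r\<in>carrier R. z \<otimes> r \<otimes> w \<in> Q} R"
proof (rule my_idealI)
  show "\<zero> \<in> {z \<in> carrier R. \<forall>r\<in>carrier R. z \<otimes> r \<otimes> w \<in> Q}"
    using w Q by (simp add: additive_subgroup.zero_closed ideal.axioms(1))
  show "a \<oplus> c \<in> {z \<in> carrier R. \<forall>r\<in>carrier R. z \<otimes> r \<otimes> w \<in> Q}"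
    if "a \<in> {z \<in> carrier R. \<forall>r\<in>carrier R. z \<otimes> r \<otimes> w \<in> Q}" "c \<in> {z \<in> carrier R. \<forall>r\<in>carrier R. z \<otimes> r \<otimes> w \<in> Q}" for a c
    using that w Q by (auto simp: l_distr additive_subgroup.a_closed ideal.axioms(1))
  show "\<ominus> a \<in> {z \<in> carrier R. \<forall>r\<in>carrier R. z \<otimes> r \<otimes> w \<in> Q}"
    if "a \<in> {z \<in> carrier R. \<forall>r\<in>carrier R. z \<otimes> r \<otimes> w \<in> Q}" for a
    using that w Q by (auto simp: l_minus ideal_ainv)
  show "x \<otimes> a \<in> {z \<in> carrier R. \<forall>r\<in>carrier R. z \<otimes> r \<otimes> w \<in> Q}"
    if "a \<in> {z \<in> carrier R. \<forall>r\<in>carrier R. z \<otimes> r \<otimes> w \<in> Q}" "x \<in> carrier R" for a x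
  proof -
    have a: "a \<in> carrier R" "\<forall>r\<in>carrier R. a \<otimes> r \<otimes> w \<in> Q" using that by auto
    have "x \<otimes> a \<otimes> r \<otimes> w \<in> Q" if r: "r \<in> carrier R" for r
    proof -
      have "x \<otimes> a \<otimes> r \<otimes> w = x \<otimes> (a \<otimes> r \<otimes> w)" using a r w \<open>x \<in> carrier R\<close> by (simp add: m_assoc)
      then show ?thesis using a(2) r \<open>x \<in> carrier R\<close> Q ideal.I_l_closed by fastforce
    qed
    then show ?thesis using a \<open>x \<in> carrier R\<close> by simp
  qed
  show "a \<otimes> x \<in> {z \<in> carrier R. \<forall>r\<in>carrier R. z \<otimes> r \<otimes> w \<in> Q}"
    if "a \<in> {z \<in> carrier R. \<forall>r\<in>carrier R. z \<otimes> r \<otimes> w \<in> Q}" "x \<in> carrier R" for a x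
  proof -
    have a: "a \<in> carrier R" "\<forall>r\<in>carrier R. a \<otimes> r \<otimes> w \<in> Q" using that by auto
    have "a \<otimes> x \<otimes> r \<otimes> w \<in> Q" if r: "r \<in> carrier R" for r
    proof -
      have "a \<otimes> x \<otimes> r \<otimes> w = a \<otimes> (x \<otimes> r) \<otimes> w" using a r w \<open>x \<in> carrier R\<close> by (simp add: m_assoc)
      then show ?thesis using a(2) r \<open>x \<in> carrier R\<close> by simp
    qed
    then show ?thesis using a \<open>x \<in> carrier R\<close> by simp
  qed
qed auto

lemma exists_Q:
  assumes c: "c \<in> carrier R" and nn: "\<forall>n::nat. c [^] n \<noteq> \<zero>"
  shows "\<exists>Q. ideal Q R \<and> (\<forall>n::nat. c [^] n \<notin> Q) \<and>
    (\<forall>a\<in>carrier R. \<forall>d\<in>carrier R. (\<forall>r\<in>carrier R. a \<otimes> r \<otimes> d \<in> Q) \<longrightarrow> a \<in> Q \<or> d \<in> Q)"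
proof -
  define A where "A = {Q. ideal Q R \<and> (\<forall>n::nat. c [^] n \<notin> Q)}"
  have z: "{\<zero>} \<in> A" using zeroideal nn by (auto simp: A_def)
  have "\<exists>Q\<in>A. \<forall>Y\<in>A. Q \<subseteq> Y \<longrightarrow> Y = Q"
  proof (rule subset_Zorn_nonempty)
    show "A \<noteq> {}" using z by blast
    fix C assume C: "C \<noteq> {}" "subset.chain A C"
    then have CA: "C \<subseteq> A" and ch: "\<forall>I\<in>C. \<forall>J\<in>C. I \<subseteq> J \<or> J \<subseteq> I"
      by (auto simp: subset.chain_def)
    have "ideal (\<Union>C) R"
    proof (rule chain_ideal)
      show "C \<noteq> {}" by fact
      show "ideal I R" if "I \<in> C" for I using that CA by (auto simp: A_def)
      show "I \<subseteq> J \<or> J \<subseteq> I" if "I \<in> C" "J \<in> C" for I J using that ch by blast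
    qed
    moreover have "\<forall>n::nat. c [^] n \<notin> \<Union>C" using CA by (auto simp: A_def)
    ultimately show "\<Union>C \<in> A" by (simp add: A_def)
  qed
  then obtain Q where QA: "Q \<in> A" and max: "\<forall>Y\<in>A. Q \<subseteq> Y \<longrightarrow> Y = Q" by blast
  have Qi: "ideal Q R" and Qn: "\<forall>n::nat. c [^] n \<notin> Q" using QA by (auto simp: A_def)
  have meet: "\<exists>n::nat. c [^] n \<in> Y" if "ideal Y R" "Q \<subseteq> Y" "Y \<noteq> Q" for Y
    using max that by (auto simp: A_def)
  have "a \<in> Q \<or> d \<in> Q" if a: "a \<in> carrier R" and d: "d \<in> carrier R"
     and H: "\<forall>r\<in>carrier R. a \<otimes> r \<otimes> d \<in> Q" for a d
  proof (rule ccontr)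
    assume nq: "\<not> (a \<in> Q \<or> d \<in> Q)"
    define T where "T = {w \<in> carrier R. \<forall>r\<in>carrier R. a \<otimes> r \<otimes> w \<in> Q}"
    have Ti: "ideal T R" unfolding T_def using T_ideal[OF Qi a] .
    have QT: "Q \<subseteq> T"
    proof
      fix q assume q: "q \<in> Q"
      then have qc: "q \<in> carrier R" using ideal.Icarr[OF Qi] by blast
      have "a \<otimes> r \<otimes> q \<in> Q" if "r \<in> carrier R" for r
        using ideal.I_l_closed[OF Qi q] a that by simp
      then show "q \<in> T" using qc by (simp add: T_def)
    qed
    have "d \<in> T" using d H by (simp add: T_def)
    then have "T \<noteq> Q" using nq by blast
    then obtain n :: nat where n: "c [^] n \<in> T" using meet[OF Ti QT] by blast
    have cn: "c [^] n \<in> carrier R" using c by simp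
    define U where "U = {z \<in> carrier R. \<forall>r\<in>carrier R. z \<otimes> r \<otimes> c [^] n \<in> Q}"
    have Ui: "ideal U R" unfolding U_def using U_ideal[OF Qi cn] .
    have QU: "Q \<subseteq> U"
    proof
      fix q assume q: "q \<in> Q"
      then have qc: "q \<in> carrier R" using ideal.Icarr[OF Qi] by blast
      have "q \<otimes> r \<otimes> c [^] n \<in> Q" if "r \<in> carrier R" for r
        using ideal.I_r_closed[OF Qi ideal.I_r_closed[OF Qi q that] cn] .
      then show "q \<in> U" using qc by (simp add: U_def)
    qed
    have "a \<in> U" using n a by (simp add: T_def U_def)
    then have "U \<noteq> Q" using nq by blast
    then obtain m :: nat where m: "c [^] m \<in> U" using meet[OF Ui QU] by blast
    then have "c [^] m \<otimes> \<one> \<otimes> c [^] n \<in> Q" unfolding U_def using one_closed by blast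
    then have "c [^] (m + n) \<in> Q" using c by (simp add: nat_pow_mult)
    then show False using Qn by blast
  qed
  then show ?thesis using Qi Qn by blast
qed

end

lemma ag_idem_zero:
  assumes G: "abelian_group G" and a: "a \<in> carrier G" and h: "a \<oplus>\<^bsub>G\<^esub> a = a"
  shows "a = \<zero>\<^bsub>G\<^esub>"
proof -
  interpret abelian_group G by (rule G)
  have "a = (\<ominus>\<^bsub>G\<^esub> a \<oplus>\<^bsub>G\<^esub> a) \<oplus>\<^bsub>G\<^esub> a" using a by (simp add: l_neg)
  also have "\<dots> = \<ominus>\<^bsub>G\<^esub> a \<oplus>\<^bsub>G\<^esub> (a \<oplus>\<^bsub>G\<^esub> a)" using a by (simp add: a_assoc)
  also have "\<dots> = \<zero>\<^bsub>G\<^esub>" using a h G by (simp add: abelian_group.l_neg)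
  finally show ?thesis .
qed

lemma ainv_sub:
  assumes G: "abelian_group M" and NM: "N \<subseteq> carrier M" and x: "x \<in> N" and nx: "\<ominus>\<^bsub>M\<^esub> x \<in> N"
  shows "\<ominus>\<^bsub>M\<lparr>carrier := N\<rparr>\<^esub> x = \<ominus>\<^bsub>M\<^esub> x"
proof -
  have xc: "x \<in> carrier M" using x NM by blast
  have "(THE y. y \<in> N \<and> x \<oplus>\<^bsub>M\<^esub> y = \<zero>\<^bsub>M\<^esub> \<and> y \<oplus>\<^bsub>M\<^esub> x = \<zero>\<^bsub>M\<^esub>) = \<ominus>\<^bsub>M\<^esub> x"
  proof (rule the_equality)
    show "\<ominus>\<^bsub>M\<^esub> x \<in> N \<and> x \<oplus>\<^bsub>M\<^esub> \<ominus>\<^bsub>M\<^esub> x = \<zero>\<^bsub>M\<^esub> \<and> \<ominus>\<^bsub>M\<^esub> x \<oplus>\<^bsub>M\<^esub> x = \<zero>\<^bsub>M\<^esub>"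
      using nx xc G by (simp add: abelian_group.l_neg abelian_group.r_neg)
    fix y assume "y \<in> N \<and> x \<oplus>\<^bsub>M\<^esub> y = \<zero>\<^bsub>M\<^esub> \<and> y \<oplus>\<^bsub>M\<^esub> x = \<zero>\<^bsub>M\<^esub>"
    then show "y = \<ominus>\<^bsub>M\<^esub> x" using NM xc G by (metis abelian_group.minus_equality subsetD)
  qed
  then show ?thesis by (simp add: a_inv_def m_inv_def)
qed

lemma lmodule_facts:
  assumes "lmodule R M"
  shows "ring R" "abelian_group M"
    "\<And>a x. a \<in> carrier R \<Longrightarrow> x \<in> carrier M \<Longrightarrow> a \<odot>\<^bsub>M\<^esub> x \<in> carrier M"
    "\<And>a b x. a \<in> carrier R \<Longrightarrow> b \<in> carrier R \<Longrightarrow> x \<in> carrier M \<Longrightarrow>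
        (a \<oplus>\<^bsub>R\<^esub> b) \<odot>\<^bsub>M\<^esub> x = (a \<odot>\<^bsub>M\<^esub> x) \<oplus>\<^bsub>M\<^esub> (b \<odot>\<^bsub>M\<^esub> x)"
    "\<And>a x y. a \<in> carrier R \<Longrightarrow> x \<in> carrier M \<Longrightarrow> y \<in> carrier M \<Longrightarrow>
        a \<odot>\<^bsub>M\<^esub> (x \<oplus>\<^bsub>M\<^esub> y) = (a \<odot>\<^bsub>M\<^esub> x) \<oplus>\<^bsub>M\<^esub> (a \<odot>\<^bsub>M\<^esub> y)"
    "\<And>a b x. a \<in> carrier R \<Longrightarrow> b \<in> carrier R \<Longrightarrow> x \<in> carrier M \<Longrightarrow>
        (a \<otimes>\<^bsub>R\<^esub> b) \<odot>\<^bsub>M\<^esub> x = a \<odot>\<^bsub>M\<^esub> (b \<odot>\<^bsub>M\<^esub> x)"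
    "\<And>x. x \<in> carrier M \<Longrightarrow> \<one>\<^bsub>R\<^esub> \<odot>\<^bsub>M\<^esub> x = x"
  using assms unfolding lmodule_def by auto

lemma zero_smult:
  assumes "lmodule R M" "x \<in> carrier M"
  shows "\<zero>\<^bsub>R\<^esub> \<odot>\<^bsub>M\<^esub> x = \<zero>\<^bsub>M\<^esub>"
proof -
  note F = lmodule_facts[OF assms(1)]
  have z: "\<zero>\<^bsub>R\<^esub> \<in> carrier R" using ring.ring_simprules(2)[OF F(1)] .
  have "\<zero>\<^bsub>R\<^esub> \<oplus>\<^bsub>R\<^esub> \<zero>\<^bsub>R\<^esub> = \<zero>\<^bsub>R\<^esub>" using F(1) z by (simp add: ring.ring_simprules(15))
  then have "(\<zero>\<^bsub>R\<^esub> \<odot>\<^bsub>M\<^esub> x) \<oplus>\<^bsub>M\<^esub> (\<zero>\<^bsub>R\<^esub> \<odot>\<^bsub>M\<^esub> x) = \<zero>\<^bsub>R\<^esub> \<odot>\<^bsub>M\<^esub> x"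
    using F(4)[OF z z assms(2)] by simp
  then show ?thesis using ag_idem_zero[OF F(2)] F(3)[OF z assms(2)] by blast
qed

lemma pow_smult:
  assumes "lmodule R M" "r \<in> carrier R" "x \<in> carrier M"
  shows "(r [^]\<^bsub>R\<^esub> Suc k) \<odot>\<^bsub>M\<^esub> x = r \<odot>\<^bsub>M\<^esub> ((r [^]\<^bsub>R\<^esub> k) \<odot>\<^bsub>M\<^esub> x)"
proof -
  note F = lmodule_facts[OF assms(1)]
  have m: "monoid R" using F(1) ring.is_monoid by blast
  have "r [^]\<^bsub>R\<^esub> Suc k = r \<otimes>\<^bsub>R\<^esub> r [^]\<^bsub>R\<^esub> k" using monoid.nat_pow_Suc2[OF m assms(2)] .
  moreover have "r [^]\<^bsub>R\<^esub> k \<in> carrier R" using monoid.nat_pow_closed[OF m assms(2)] .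
  ultimately show ?thesis using F(6) assms by simp
qed

lemma sub_self:
  assumes "lmodule R M" "lsubmodule R N M"
  shows "lsubmodule R N (M\<lparr>carrier := N\<rparr>)"
proof -
  note F = lmodule_facts[OF assms(1)]
  have S: "N \<subseteq> carrier M" "\<zero>\<^bsub>M\<^esub> \<in> N" "\<forall>x\<in>N. \<forall>y\<in>N. x \<oplus>\<^bsub>M\<^esub> y \<in> N" "\<forall>x\<in>N. \<ominus>\<^bsub>M\<^esub> x \<in> N"
    "\<forall>a\<in>carrier R. \<forall>x\<in>N. a \<odot>\<^bsub>M\<^esub> x \<in> N"
    using assms(2) unfolding lsubmodule_def by auto
  have "\<forall>x\<in>N. \<ominus>\<^bsub>M\<lparr>carrier := N\<rparr>\<^esub> x \<in> N" using ainv_sub[OF F(2) S(1)] S(4) by simp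
  then show ?thesis using S unfolding lsubmodule_def by simp
qed

lemma gen_sub:
  assumes "lsubmodule R (carrier Y) Y" "S \<subseteq> carrier Y"
  shows "lsubmodule R (gen_submodule R Y S) Y" "S \<subseteq> gen_submodule R Y S"
    "\<And>K. lsubmodule R K Y \<Longrightarrow> S \<subseteq> K \<Longrightarrow> gen_submodule R Y S \<subseteq> K"
proof -
  have CF: "carrier Y \<in> {K. lsubmodule R K Y \<and> S \<subseteq> K}" using assms by simp
  have sub: "gen_submodule R Y S \<subseteq> carrier Y" unfolding gen_submodule_def using CF by blast
  show "lsubmodule R (gen_submodule R Y S) Y"
    unfolding lsubmodule_def[of R "gen_submodule R Y S" Y] using sub
    unfolding gen_submodule_def by (auto simp: lsubmodule_def)
  show "S \<subseteq> gen_submodule R Y S" unfolding gen_submodule_def by blast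
  show "\<And>K. lsubmodule R K Y \<Longrightarrow> S \<subseteq> K \<Longrightarrow> gen_submodule R Y S \<subseteq> K"
    unfolding gen_submodule_def by blast
qed

lemma E_sub:
  assumes "lsubmodule R N M"
  shows "E_zero R (M\<lparr>carrier := N\<rparr>) \<subseteq> N"
  using assms unfolding E_zero_def lsubmodule_def by auto

lemma cp_E:
  assumes LM: "lmodule R M" and LN: "lsubmodule R N M"
    and CP: "completely_prime_submodule R (M\<lparr>carrier := N\<rparr>) P"
  shows "E_zero R (M\<lparr>carrier := N\<rparr>) \<subseteq> P"
proof
  note F = lmodule_facts[OF LM]
  have NM: "N \<subseteq> carrier M" and Nsm: "\<forall>a\<in>carrier R. \<forall>x\<in>N. a \<odot>\<^bsub>M\<^esub> x \<in> N"
    using LN unfolding lsubmodule_def by auto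
  have P0: "\<zero>\<^bsub>M\<^esub> \<in> P" and Psm: "\<forall>a\<in>carrier R. \<forall>x\<in>P. a \<odot>\<^bsub>M\<^esub> x \<in> P"
    using CP unfolding completely_prime_submodule_def lsubmodule_def by auto
  have cp: "\<forall>r\<in>carrier R. \<forall>x\<in>N. r \<odot>\<^bsub>M\<^esub> x \<in> P
        \<longrightarrow> x \<in> P \<or> smult_set (M\<lparr>carrier := N\<rparr>) {r} N \<subseteq> P"
    using CP unfolding completely_prime_submodule_def by simp
  fix z assume "z \<in> E_zero R (M\<lparr>carrier := N\<rparr>)"
  then obtain r x k where z: "z = r \<odot>\<^bsub>M\<^esub> x" and r: "r \<in> carrier R" and x: "x \<in> N"
    and k: "(r [^]\<^bsub>R\<^esub> (k::nat)) \<odot>\<^bsub>M\<^esub> x = \<zero>\<^bsub>M\<^esub>"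
    unfolding E_zero_def by auto
  have m: "monoid R" using F(1) ring.is_monoid by blast
  have claim: "(r [^]\<^bsub>R\<^esub> (n::nat)) \<odot>\<^bsub>M\<^esub> x \<in> P \<longrightarrow> x \<in> P \<or> smult_set (M\<lparr>carrier := N\<rparr>) {r} N \<subseteq> P" for n
  proof (induction n)
    case 0
    then show ?case using F(7) x NM by auto
  next
    case (Suc n)
    have pc: "r [^]\<^bsub>R\<^esub> n \<in> carrier R" using monoid.nat_pow_closed[OF m r] .
    have xn: "(r [^]\<^bsub>R\<^esub> n) \<odot>\<^bsub>M\<^esub> x \<in> N" using Nsm pc x by blast
    show ?case
    proof
      assume "(r [^]\<^bsub>R\<^esub> Suc n) \<odot>\<^bsub>M\<^esub> x \<in> P"
      then have "r \<odot>\<^bsub>M\<^esub> ((r [^]\<^bsub>R\<^esub> n) \<odot>\<^bsub>M\<^esub> x) \<in> P" using pow_smult[OF LM r] x NM by auto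
      then have "(r [^]\<^bsub>R\<^esub> n) \<odot>\<^bsub>M\<^esub> x \<in> P \<or> smult_set (M\<lparr>carrier := N\<rparr>) {r} N \<subseteq> P"
        using cp r xn by blast
      then show "x \<in> P \<or> smult_set (M\<lparr>carrier := N\<rparr>) {r} N \<subseteq> P" using Suc by blast
    qed
  qed
  have "x \<in> P \<or> smult_set (M\<lparr>carrier := N\<rparr>) {r} N \<subseteq> P" using claim[of k] k P0 by simp
  moreover have "r \<odot>\<^bsub>M\<^esub> x \<in> smult_set (M\<lparr>carrier := N\<rparr>) {r} N" using x unfolding smult_set_def by auto
  ultimately show "z \<in> P" using z Psm r by blast
qed

lemma part2:
  assumes LM: "lmodule R M" and LN: "lsubmodule R N M"
  shows "gen_submodule R (M\<lparr>carrier := N\<rparr>) (E_zero R (M\<lparr>carrier := N\<rparr>))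
           \<subseteq> co_prime_radical R (M\<lparr>carrier := N\<rparr>)"
proof -
  have SS: "lsubmodule R (carrier (M\<lparr>carrier := N\<rparr>)) (M\<lparr>carrier := N\<rparr>)" using sub_self[OF LM LN] by simp
  have ES: "E_zero R (M\<lparr>carrier := N\<rparr>) \<subseteq> carrier (M\<lparr>carrier := N\<rparr>)" using E_sub[OF LN] by simp
  note G = gen_sub[OF SS ES]
  show ?thesis
  proof (cases "\<exists>P. completely_prime_submodule R (M\<lparr>carrier := N\<rparr>) P")
    case True
    have "gen_submodule R (M\<lparr>carrier := N\<rparr>) (E_zero R (M\<lparr>carrier := N\<rparr>)) \<subseteq> P"
      if "completely_prime_submodule R (M\<lparr>carrier := N\<rparr>) P" for P
      using G(3)[OF _ cp_E[OF LM LN that]] that unfolding completely_prime_submodule_def by blast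
    then show ?thesis using True unfolding co_prime_radical_def by auto
  next
    case False
    then show ?thesis using G(1) unfolding co_prime_radical_def lsubmodule_def by auto
  qed
qed


lemma partB:
  fixes p :: "('i \<Rightarrow> 'r) \<Rightarrow> 'm" and R :: "'r ring" and M :: "('r, 'm) module"
  assumes LM: "lmodule R M" and LN: "lsubmodule R N M"
    and CF_def: "CF = {f. (\<forall>i. f i \<in> carrier R) \<and> (\<forall>i. i \<notin> I \<longrightarrow> f i = \<zero>\<^bsub>R\<^esub>) \<and> finite {i. f i \<noteq> \<zero>\<^bsub>R\<^esub>}}"
    and pN: "\<forall>f\<in>CF. p f \<in> N"
    and padd: "\<forall>f\<in>CF. \<forall>g\<in>CF. p (\<lambda>j. f j \<oplus>\<^bsub>R\<^esub> g j) = p f \<oplus>\<^bsub>M\<^esub> p g"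
    and psm: "\<forall>a\<in>carrier R. \<forall>f\<in>CF. p (\<lambda>j. a \<otimes>\<^bsub>R\<^esub> f j) = a \<odot>\<^bsub>M\<^esub> p f"
    and D: "finite D"
  shows "\<forall>f\<in>CF. {j. f j \<noteq> \<zero>\<^bsub>R\<^esub>} = D \<longrightarrow> (\<forall>j. \<exists>k::nat. f j [^]\<^bsub>R\<^esub> k = \<zero>\<^bsub>R\<^esub>) \<longrightarrow>
      p f \<in> gen_submodule R (M\<lparr>carrier := N\<rparr>) (E_zero R (M\<lparr>carrier := N\<rparr>))"
  using D
proof (induction D rule: finite_induct)
  note F = lmodule_facts[OF LM]
  have rR: "ring R" by (rule F(1))
  interpret R: ring R by (rule rR)
  have NM: "N \<subseteq> carrier M" using LN unfolding lsubmodule_def by auto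
  have SS: "lsubmodule R (carrier (M\<lparr>carrier := N\<rparr>)) (M\<lparr>carrier := N\<rparr>)" using sub_self[OF LM LN] by simp
  have ES: "E_zero R (M\<lparr>carrier := N\<rparr>) \<subseteq> carrier (M\<lparr>carrier := N\<rparr>)" using E_sub[OF LN] by simp
  note G = gen_sub[OF SS ES]
  case empty
  show ?case
  proof (intro ballI impI)
    fix f assume f: "f \<in> CF" "{j. f j \<noteq> \<zero>\<^bsub>R\<^esub>} = {}"
    then have fz: "f = (\<lambda>j. \<zero>\<^bsub>R\<^esub>)" by auto
    have zz: "(\<lambda>j. \<zero>\<^bsub>R\<^esub> \<oplus>\<^bsub>R\<^esub> \<zero>\<^bsub>R\<^esub>) = (\<lambda>j::'i. \<zero>\<^bsub>R\<^esub>)" by simp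
    have ff: "(\<lambda>j. f j \<oplus>\<^bsub>R\<^esub> f j) = f" using fz zz by simp
    have "p f \<oplus>\<^bsub>M\<^esub> p f = p (\<lambda>j. f j \<oplus>\<^bsub>R\<^esub> f j)" using padd[rule_format, OF f(1) f(1)] by simp
    then have pp: "p f \<oplus>\<^bsub>M\<^esub> p f = p f" using ff by simp
    have "p f \<in> carrier M" using pN f(1) NM by blast
    then have "p f = \<zero>\<^bsub>M\<^esub>" using ag_idem_zero[OF F(2) _ pp] by blast
    moreover have "\<zero>\<^bsub>M\<^esub> \<in> gen_submodule R (M\<lparr>carrier := N\<rparr>) (E_zero R (M\<lparr>carrier := N\<rparr>))"
      using G(1) unfolding lsubmodule_def by simp
    ultimately show "p f \<in> gen_submodule R (M\<lparr>carrier := N\<rparr>) (E_zero R (M\<lparr>carrier := N\<rparr>))" by simp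
  qed
next
  note F = lmodule_facts[OF LM]
  have rR: "ring R" by (rule F(1))
  interpret R: ring R by (rule rR)
  have m: "monoid R" using rR ring.is_monoid by blast
  have NM: "N \<subseteq> carrier M" using LN unfolding lsubmodule_def by auto
  have SS: "lsubmodule R (carrier (M\<lparr>carrier := N\<rparr>)) (M\<lparr>carrier := N\<rparr>)" using sub_self[OF LM LN] by simp
  have ES: "E_zero R (M\<lparr>carrier := N\<rparr>) \<subseteq> carrier (M\<lparr>carrier := N\<rparr>)" using E_sub[OF LN] by simp
  note G = gen_sub[OF SS ES]
  have Gadd: "\<forall>x\<in>gen_submodule R (M\<lparr>carrier := N\<rparr>) (E_zero R (M\<lparr>carrier := N\<rparr>)).
     \<forall>y\<in>gen_submodule R (M\<lparr>carrier := N\<rparr>) (E_zero R (M\<lparr>carrier := N\<rparr>)).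
       x \<oplus>\<^bsub>M\<^esub> y \<in> gen_submodule R (M\<lparr>carrier := N\<rparr>) (E_zero R (M\<lparr>carrier := N\<rparr>))"
    using G(1) unfolding lsubmodule_def by simp
  case (insert j D)
  show ?case
  proof (intro ballI impI)
    fix f assume f: "f \<in> CF" "{j. f j \<noteq> \<zero>\<^bsub>R\<^esub>} = insert j D" and nil: "\<forall>j. \<exists>k::nat. f j [^]\<^bsub>R\<^esub> k = \<zero>\<^bsub>R\<^esub>"
    define c where "c = f j"
    have cR: "c \<in> carrier R" using f(1) unfolding CF_def c_def by auto
    have cnz: "c \<noteq> \<zero>\<^bsub>R\<^esub>" using f(2) unfolding c_def by auto
    have jI: "j \<in> I" using f(1) cnz unfolding CF_def c_def by auto
    define f' where "f' = f(j := \<zero>\<^bsub>R\<^esub>)"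
    have supp': "{i. f' i \<noteq> \<zero>\<^bsub>R\<^esub>} = D" using f(2) insert.hyps(2) unfolding f'_def by auto
    have f'CF: "f' \<in> CF" using f(1) supp' insert.hyps(1) unfolding CF_def f'_def
      by auto
    have nil': "\<forall>i. \<exists>k::nat. f' i [^]\<^bsub>R\<^esub> k = \<zero>\<^bsub>R\<^esub>"
    proof
      fix i show "\<exists>k::nat. f' i [^]\<^bsub>R\<^esub> k = \<zero>\<^bsub>R\<^esub>"
      proof (cases "i = j")
        case True
        have "\<zero>\<^bsub>R\<^esub> [^]\<^bsub>R\<^esub> (1::nat) = \<zero>\<^bsub>R\<^esub>"
          using monoid.nat_pow_eone[OF m ring.ring_simprules(2)[OF rR]] .
        moreover have "f' i = \<zero>\<^bsub>R\<^esub>" unfolding f'_def using True by simp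
        ultimately have "f' i [^]\<^bsub>R\<^esub> (1::nat) = \<zero>\<^bsub>R\<^esub>" by (simp only:)
        then show ?thesis by blast
      next
        case False
        then show ?thesis using nil unfolding f'_def by auto
      qed
    qed
    have IH: "p f' \<in> gen_submodule R (M\<lparr>carrier := N\<rparr>) (E_zero R (M\<lparr>carrier := N\<rparr>))"
      using insert.IH f'CF supp' nil' by blast
    define e where "e = (\<lambda>i. if i = j then \<one>\<^bsub>R\<^esub> else \<zero>\<^bsub>R\<^esub>)"
    have "{i. e i \<noteq> \<zero>\<^bsub>R\<^esub>} \<subseteq> {j}" unfolding e_def by auto
    then have "finite {i. e i \<noteq> \<zero>\<^bsub>R\<^esub>}" using finite_subset by blast
    then have eCF: "e \<in> CF" using jI unfolding CF_def e_def
      by auto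
    have ceCF: "(\<lambda>i. c \<otimes>\<^bsub>R\<^esub> e i) \<in> CF"
    proof -
      have "(\<lambda>i. c \<otimes>\<^bsub>R\<^esub> e i) = (\<lambda>i. if i = j then c else \<zero>\<^bsub>R\<^esub>)"
        using cR unfolding e_def by auto
      moreover have "{i. (if i = j then c else \<zero>\<^bsub>R\<^esub>) \<noteq> \<zero>\<^bsub>R\<^esub>} \<subseteq> {j}" by auto
      ultimately show ?thesis using jI cR finite_subset unfolding CF_def
        by auto
    qed
    have fdec: "f = (\<lambda>i. f' i \<oplus>\<^bsub>R\<^esub> c \<otimes>\<^bsub>R\<^esub> e i)"
    proof
      fix i
      have fi: "f i \<in> carrier R" using f(1) unfolding CF_def by auto
      show "f i = f' i \<oplus>\<^bsub>R\<^esub> c \<otimes>\<^bsub>R\<^esub> e i"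
        using fi cR rR unfolding f'_def e_def c_def
        by (cases "i = j") auto
    qed
    have "p f = p f' \<oplus>\<^bsub>M\<^esub> c \<odot>\<^bsub>M\<^esub> p e"
    proof -
      have "p f = p (\<lambda>i. f' i \<oplus>\<^bsub>R\<^esub> c \<otimes>\<^bsub>R\<^esub> e i)" using fdec by (rule arg_cong)
      also have "\<dots> = p f' \<oplus>\<^bsub>M\<^esub> p (\<lambda>i. c \<otimes>\<^bsub>R\<^esub> e i)" using padd[rule_format, OF f'CF ceCF] by simp
      also have "p (\<lambda>i. c \<otimes>\<^bsub>R\<^esub> e i) = c \<odot>\<^bsub>M\<^esub> p e" using psm cR eCF by blast
      finally show ?thesis .
    qed
    moreover have "c \<odot>\<^bsub>M\<^esub> p e \<in> E_zero R (M\<lparr>carrier := N\<rparr>)"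
    proof -
      obtain k :: nat where k: "c [^]\<^bsub>R\<^esub> k = \<zero>\<^bsub>R\<^esub>" using nil unfolding c_def by blast
      have peN: "p e \<in> N" using pN eCF by blast
      have "(c [^]\<^bsub>R\<^esub> k) \<odot>\<^bsub>M\<^esub> p e = \<zero>\<^bsub>M\<^esub>" using k zero_smult[OF LM] peN NM by auto
      then show ?thesis unfolding E_zero_def using cR peN by auto
    qed
    ultimately show "p f \<in> gen_submodule R (M\<lparr>carrier := N\<rparr>) (E_zero R (M\<lparr>carrier := N\<rparr>))"
      using IH G(2) Gadd by auto
  qed
qed


lemma partA:
  fixes i :: "'m \<Rightarrow> 'i \<Rightarrow> 'r" and R :: "'r ring" and M :: "('r, 'm) module"
  assumes LM: "lmodule R M" and LN: "lsubmodule R N M"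
    and CF_def: "CF = {f. (\<forall>i. f i \<in> carrier R) \<and> (\<forall>i. i \<notin> I \<longrightarrow> f i = \<zero>\<^bsub>R\<^esub>) \<and> finite {i. f i \<noteq> \<zero>\<^bsub>R\<^esub>}}"
    and iN: "\<forall>x\<in>N. i x \<in> CF"
    and iadd: "\<forall>x\<in>N. \<forall>y\<in>N. i (x \<oplus>\<^bsub>M\<^esub> y) = (\<lambda>j. i x j \<oplus>\<^bsub>R\<^esub> i y j)"
    and ism: "\<forall>a\<in>carrier R. \<forall>x\<in>N. i (a \<odot>\<^bsub>M\<^esub> x) = (\<lambda>j. a \<otimes>\<^bsub>R\<^esub> i x j)"
    and x: "x \<in> N" and nn: "\<forall>n::nat. i x j0 [^]\<^bsub>R\<^esub> n \<noteq> \<zero>\<^bsub>R\<^esub>"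
  shows "\<exists>P. prime_submodule R (M\<lparr>carrier := N\<rparr>) P \<and> x \<notin> P"
proof -
  note F = lmodule_facts[OF LM]
  have rR: "ring R" by (rule F(1))
  interpret R: ring R by (rule rR)
  interpret Mg: abelian_group M by (rule F(2))
  have m: "monoid R" using rR ring.is_monoid by blast
  have S: "N \<subseteq> carrier M" "\<zero>\<^bsub>M\<^esub> \<in> N" "\<forall>x\<in>N. \<forall>y\<in>N. x \<oplus>\<^bsub>M\<^esub> y \<in> N" "\<forall>x\<in>N. \<ominus>\<^bsub>M\<^esub> x \<in> N"
    "\<forall>a\<in>carrier R. \<forall>x\<in>N. a \<odot>\<^bsub>M\<^esub> x \<in> N"
    using LN unfolding lsubmodule_def by auto
  have iR: "i y j \<in> carrier R" if "y \<in> N" for y j using iN that unfolding CF_def by auto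
  define c where "c = i x j0"
  have cR: "c \<in> carrier R" using iR x unfolding c_def by blast
  obtain Q where Qi: "ideal Q R" and Qn: "\<forall>n::nat. c [^]\<^bsub>R\<^esub> n \<notin> Q"
    and Qp: "\<forall>a\<in>carrier R. \<forall>d\<in>carrier R. (\<forall>r\<in>carrier R. a \<otimes>\<^bsub>R\<^esub> r \<otimes>\<^bsub>R\<^esub> d \<in> Q) \<longrightarrow> a \<in> Q \<or> d \<in> Q"
    using ring.exists_Q[OF rR cR] nn unfolding c_def by blast
  have cQ: "c \<notin> Q" using Qn monoid.nat_pow_eone[OF m cR] by metis
  define P where "P = {y \<in> N. \<forall>j. i y j \<in> Q}"
  have xP: "x \<notin> P" using cQ unfolding P_def c_def by blast
  have i0: "i \<zero>\<^bsub>M\<^esub> j = \<zero>\<^bsub>R\<^esub>" for j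
  proof -
    have "i \<zero>\<^bsub>M\<^esub> = i (\<zero>\<^bsub>M\<^esub> \<oplus>\<^bsub>M\<^esub> \<zero>\<^bsub>M\<^esub>)" by simp
    also have "\<dots> = (\<lambda>j. i \<zero>\<^bsub>M\<^esub> j \<oplus>\<^bsub>R\<^esub> i \<zero>\<^bsub>M\<^esub> j)" using iadd S(2) by blast
    finally have "i \<zero>\<^bsub>M\<^esub> j \<oplus>\<^bsub>R\<^esub> i \<zero>\<^bsub>M\<^esub> j = i \<zero>\<^bsub>M\<^esub> j" by (metis (no_types))
    then show ?thesis using ag_idem_zero[OF R.is_abelian_group iR[OF S(2)]] by blast
  qed
  have ineg: "i (\<ominus>\<^bsub>M\<^esub> y) j = \<ominus>\<^bsub>R\<^esub> (i y j)" if y: "y \<in> N" for y j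
  proof -
    have yc: "y \<in> carrier M" using y S(1) by blast
    have ny: "\<ominus>\<^bsub>M\<^esub> y \<in> N" using S(4) y by blast
    have "\<ominus>\<^bsub>M\<^esub> y \<oplus>\<^bsub>M\<^esub> y = \<zero>\<^bsub>M\<^esub>" using abelian_group.l_neg[OF F(2) yc] .
    then have "i (\<ominus>\<^bsub>M\<^esub> y \<oplus>\<^bsub>M\<^esub> y) j = \<zero>\<^bsub>R\<^esub>" using i0 by simp
    then have "i (\<ominus>\<^bsub>M\<^esub> y) j \<oplus>\<^bsub>R\<^esub> i y j = \<zero>\<^bsub>R\<^esub>" using iadd ny y by simp
    then show ?thesis using R.minus_equality iR ny y by metis
  qed
  have Psub: "lsubmodule R P (M\<lparr>carrier := N\<rparr>)"
  proof -
    have "P \<subseteq> N" unfolding P_def by blast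
    moreover have "\<zero>\<^bsub>M\<^esub> \<in> P" using S(2) i0 Qi unfolding P_def
      by (simp add: additive_subgroup.zero_closed ideal.axioms(1))
    moreover have "\<forall>y\<in>P. \<forall>z\<in>P. y \<oplus>\<^bsub>M\<^esub> z \<in> P"
    proof (intro ballI)
      fix y z assume "y \<in> P" "z \<in> P"
      then have yz: "y \<in> N" "z \<in> N" "\<forall>j. i y j \<in> Q" "\<forall>j. i z j \<in> Q" unfolding P_def by auto
      have "y \<oplus>\<^bsub>M\<^esub> z \<in> N" using S(3) yz by blast
      moreover have "i (y \<oplus>\<^bsub>M\<^esub> z) j \<in> Q" for j
        using iadd yz additive_subgroup.a_closed[OF ideal.axioms(1)[OF Qi]] by simp
      ultimately show "y \<oplus>\<^bsub>M\<^esub> z \<in> P" unfolding P_def by blast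
    qed
    moreover have "\<forall>y\<in>P. \<ominus>\<^bsub>M\<lparr>carrier := N\<rparr>\<^esub> y \<in> P"
    proof
      fix y assume "y \<in> P"
      then have yy: "y \<in> N" "\<forall>j. i y j \<in> Q" unfolding P_def by auto
      have e: "\<ominus>\<^bsub>M\<lparr>carrier := N\<rparr>\<^esub> y = \<ominus>\<^bsub>M\<^esub> y" using ainv_sub[OF F(2) S(1) yy(1)] S(4) yy(1) by blast
      have "\<ominus>\<^bsub>M\<^esub> y \<in> N" using S(4) yy by blast
      moreover have "i (\<ominus>\<^bsub>M\<^esub> y) j \<in> Q" for j
        using ineg[OF yy(1)] yy(2) additive_subgroup.a_inv_closed[OF ideal.axioms(1)[OF Qi]] by simp
      ultimately show "\<ominus>\<^bsub>M\<lparr>carrier := N\<rparr>\<^esub> y \<in> P" unfolding P_def e by blast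
    qed
    moreover have "\<forall>a\<in>carrier R. \<forall>y\<in>P. a \<odot>\<^bsub>M\<^esub> y \<in> P"
    proof (intro ballI)
      fix a y assume a: "a \<in> carrier R" and "y \<in> P"
      then have yy: "y \<in> N" "\<forall>j. i y j \<in> Q" unfolding P_def by auto
      have "a \<odot>\<^bsub>M\<^esub> y \<in> N" using S(5) a yy by blast
      moreover have "i (a \<odot>\<^bsub>M\<^esub> y) j \<in> Q" for j
        using ism a yy ideal.I_l_closed[OF Qi] by simp
      ultimately show "a \<odot>\<^bsub>M\<^esub> y \<in> P" unfolding P_def by blast
    qed
    ultimately show ?thesis unfolding lsubmodule_def by simp
  qed
  have nsub: "\<not> smult_set (M\<lparr>carrier := N\<rparr>) (carrier R) (carrier (M\<lparr>carrier := N\<rparr>)) \<subseteq> P"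
  proof
    assume h: "smult_set (M\<lparr>carrier := N\<rparr>) (carrier R) (carrier (M\<lparr>carrier := N\<rparr>)) \<subseteq> P"
    have "\<one>\<^bsub>R\<^esub> \<odot>\<^bsub>M\<^esub> x \<in> smult_set (M\<lparr>carrier := N\<rparr>) (carrier R) (carrier (M\<lparr>carrier := N\<rparr>))"
      unfolding smult_set_def using x by auto
    moreover have "\<one>\<^bsub>R\<^esub> \<odot>\<^bsub>M\<^esub> x = x" using F(7) x S(1) by blast
    ultimately show False using h xP by auto
  qed
  have pr: "smult_set (M\<lparr>carrier := N\<rparr>) A (carrier (M\<lparr>carrier := N\<rparr>)) \<subseteq> P \<or> K \<subseteq> P"
    if A: "ideal A R" and K: "lsubmodule R K (M\<lparr>carrier := N\<rparr>)"
      and AK: "smult_set (M\<lparr>carrier := N\<rparr>) A K \<subseteq> P" for A K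
  proof (rule disjCI)
    assume "\<not> K \<subseteq> P"
    then obtain k where kK: "k \<in> K" and kP: "k \<notin> P" by blast
    have KN: "K \<subseteq> N" and Ksm: "\<forall>a\<in>carrier R. \<forall>x\<in>K. a \<odot>\<^bsub>M\<^esub> x \<in> K"
      using K unfolding lsubmodule_def by auto
    have kN: "k \<in> N" using KN kK by blast
    then obtain j where dQ: "i k j \<notin> Q" using kP unfolding P_def by blast
    have AQ: "a \<in> Q" if a: "a \<in> A" for a
    proof -
      have aR: "a \<in> carrier R" using ideal.Icarr[OF A a] .
      have "a \<otimes>\<^bsub>R\<^esub> r \<otimes>\<^bsub>R\<^esub> i k j \<in> Q" if r: "r \<in> carrier R" for r
      proof -
        have rk: "r \<odot>\<^bsub>M\<^esub> k \<in> K" using Ksm r kK by blast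
        have "a \<odot>\<^bsub>M\<^esub> (r \<odot>\<^bsub>M\<^esub> k) \<in> smult_set (M\<lparr>carrier := N\<rparr>) A K"
          unfolding smult_set_def using a rk by auto
        then have "a \<odot>\<^bsub>M\<^esub> (r \<odot>\<^bsub>M\<^esub> k) \<in> P" using AK by blast
        then have "i (a \<odot>\<^bsub>M\<^esub> (r \<odot>\<^bsub>M\<^esub> k)) j \<in> Q" unfolding P_def by blast
        moreover have "i (a \<odot>\<^bsub>M\<^esub> (r \<odot>\<^bsub>M\<^esub> k)) j = a \<otimes>\<^bsub>R\<^esub> (r \<otimes>\<^bsub>R\<^esub> i k j)"
          using ism aR r kN rk KN by auto
        moreover have "a \<otimes>\<^bsub>R\<^esub> (r \<otimes>\<^bsub>R\<^esub> i k j) = a \<otimes>\<^bsub>R\<^esub> r \<otimes>\<^bsub>R\<^esub> i k j"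
          using aR r iR[OF kN] by (simp add: R.m_assoc)
        ultimately show ?thesis by simp
      qed
      then show ?thesis using Qp aR iR[OF kN] dQ by blast
    qed
    show "smult_set (M\<lparr>carrier := N\<rparr>) A (carrier (M\<lparr>carrier := N\<rparr>)) \<subseteq> P"
    proof
      fix z assume "z \<in> smult_set (M\<lparr>carrier := N\<rparr>) A (carrier (M\<lparr>carrier := N\<rparr>))"
      then obtain a y where z: "z = a \<odot>\<^bsub>M\<^esub> y" and a: "a \<in> A" and y: "y \<in> N"
        unfolding smult_set_def by auto
      have aR: "a \<in> carrier R" using ideal.Icarr[OF A a] .
      have "a \<odot>\<^bsub>M\<^esub> y \<in> N" using S(5) aR y by blast
      moreover have "i (a \<odot>\<^bsub>M\<^esub> y) j' \<in> Q" for j'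
        using ism aR y ideal.I_r_closed[OF Qi AQ[OF a] iR[OF y]] by simp
      ultimately show "z \<in> P" unfolding P_def z by blast
    qed
  qed
  have "prime_submodule R (M\<lparr>carrier := N\<rparr>) P"
    unfolding prime_submodule_def using Psub nsub pr by blast
  then show ?thesis using xP by blast
qed


theorem lemma4p20:
  fixes R :: "'r ring" and M :: "('r, 'm) module" and N :: "'m set"
  assumes "left_hereditary TYPE('m) R"
    and "lmodule R M"
    and "projective R M"
    and "lsubmodule R N M"
  shows "prime_radical R (M\<lparr>carrier := N\<rparr>)
           \<subseteq> gen_submodule R (M\<lparr>carrier := N\<rparr>) (E_zero R (M\<lparr>carrier := N\<rparr>))
       \<and> gen_submodule R (M\<lparr>carrier := N\<rparr>) (E_zero R (M\<lparr>carrier := N\<rparr>))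
           \<subseteq> co_prime_radical R (M\<lparr>carrier := N\<rparr>)"
proof
  note LM = assms(2) and LN = assms(4)
  show "gen_submodule R (M\<lparr>carrier := N\<rparr>) (E_zero R (M\<lparr>carrier := N\<rparr>))
           \<subseteq> co_prime_radical R (M\<lparr>carrier := N\<rparr>)" using part2[OF LM LN] .
  have "projective R (M\<lparr>carrier := N\<rparr>)"
    using assms unfolding left_hereditary_def by blast
  then obtain I :: "'m set" and i p where
    hi: "lmod_hom R (M\<lparr>carrier := N\<rparr>) (free_lmod R I) i"
    and hp: "lmod_hom R (free_lmod R I) (M\<lparr>carrier := N\<rparr>) p"
    and pi: "\<forall>x \<in> carrier (M\<lparr>carrier := N\<rparr>). p (i x) = x"
    unfolding projective_def by blast
  define CF where "CF = {f. (\<forall>i. f i \<in> carrier R) \<and> (\<forall>i. i \<notin> I \<longrightarrow> f i = \<zero>\<^bsub>R\<^esub>) \<and> finite {i. f i \<noteq> \<zero>\<^bsub>R\<^esub>}}"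
  have iN: "\<forall>x\<in>N. i x \<in> CF"
    and iadd: "\<forall>x\<in>N. \<forall>y\<in>N. i (x \<oplus>\<^bsub>M\<^esub> y) = (\<lambda>j. i x j \<oplus>\<^bsub>R\<^esub> i y j)"
    and ism: "\<forall>a\<in>carrier R. \<forall>x\<in>N. i (a \<odot>\<^bsub>M\<^esub> x) = (\<lambda>j. a \<otimes>\<^bsub>R\<^esub> i x j)"
    using hi unfolding lmod_hom_def free_lmod_def CF_def by auto
  have pN: "\<forall>f\<in>CF. p f \<in> N"
    and padd: "\<forall>f\<in>CF. \<forall>g\<in>CF. p (\<lambda>j. f j \<oplus>\<^bsub>R\<^esub> g j) = p f \<oplus>\<^bsub>M\<^esub> p g"
    and psm: "\<forall>a\<in>carrier R. \<forall>f\<in>CF. p (\<lambda>j. a \<otimes>\<^bsub>R\<^esub> f j) = a \<odot>\<^bsub>M\<^esub> p f"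
    using hp unfolding lmod_hom_def free_lmod_def CF_def by auto
  show "prime_radical R (M\<lparr>carrier := N\<rparr>)
           \<subseteq> gen_submodule R (M\<lparr>carrier := N\<rparr>) (E_zero R (M\<lparr>carrier := N\<rparr>))"
  proof
    fix x assume xr: "x \<in> prime_radical R (M\<lparr>carrier := N\<rparr>)"
    have xN: "x \<in> N"
    proof (cases "\<exists>P. prime_submodule R (M\<lparr>carrier := N\<rparr>) P")
      case True
      then obtain P where P: "prime_submodule R (M\<lparr>carrier := N\<rparr>) P" by blast
      then have "prime_radical R (M\<lparr>carrier := N\<rparr>) = \<Inter> {P. prime_submodule R (M\<lparr>carrier := N\<rparr>) P}"
        unfolding prime_radical_def by (simp add: if_P[OF True])
      then have "x \<in> P" using xr P by blast
      moreover have "P \<subseteq> N" using P unfolding prime_submodule_def lsubmodule_def by simp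
      ultimately show ?thesis by blast
    next
      case False
      then have "prime_radical R (M\<lparr>carrier := N\<rparr>) = N" unfolding prime_radical_def by auto
      then show ?thesis using xr by simp
    qed
    have nil: "\<forall>j. \<exists>k::nat. i x j [^]\<^bsub>R\<^esub> k = \<zero>\<^bsub>R\<^esub>"
    proof (rule ccontr)
      assume "\<not> (\<forall>j. \<exists>k::nat. i x j [^]\<^bsub>R\<^esub> k = \<zero>\<^bsub>R\<^esub>)"
      then obtain j0 where nn: "\<forall>n::nat. i x j0 [^]\<^bsub>R\<^esub> n \<noteq> \<zero>\<^bsub>R\<^esub>" by blast
      obtain P where P: "prime_submodule R (M\<lparr>carrier := N\<rparr>) P" and xP: "x \<notin> P"
        using partA[OF LM LN CF_def iN iadd ism xN nn] by blast
      have "prime_radical R (M\<lparr>carrier := N\<rparr>) = \<Inter> {P. prime_submodule R (M\<lparr>carrier := N\<rparr>) P}"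
        using P unfolding prime_radical_def by (metis (mono_tags))
      then have "x \<in> P" using xr P by blast
      then show False using xP by blast
    qed
    have ix: "i x \<in> CF" using iN xN by blast
    then have fin: "finite {j. i x j \<noteq> \<zero>\<^bsub>R\<^esub>}" unfolding CF_def by blast
    have "p (i x) \<in> gen_submodule R (M\<lparr>carrier := N\<rparr>) (E_zero R (M\<lparr>carrier := N\<rparr>))"
      using partB[OF LM LN CF_def pN padd psm fin] ix nil by blast
    moreover have "p (i x) = x" using pi xN by simp
    ultimately show "x \<in> gen_submodule R (M\<lparr>carrier := N\<rparr>) (E_zero R (M\<lparr>carrier := N\<rparr>))" by simp
  qed
qed

end
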